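(* $A(1)=\int_0^\infty\left(\frac1x-\frac{1}{e^x-1}\right)^2dx=2C-\frac12.$
   Context: $A(v)=\int_0^\infty\left(\frac{1}{xv}-\frac{1}{e^{xv}-1}\right)\left(\frac1x-\frac{1}{e^x-1}\right)dx$ for $v>0$. $C=\frac{\log(2\pi)-\gamma}{2}$, with $\gamma$ the Euler–Mascheroni constant. *)

theory Defs
  imports "HOL-Analysis.Analysis"
begin

definition A_integrand :: "real \<Rightarrow> real \<Rightarrow> real" where
  "A_integrand v x = (1 / (x * v) - 1 / (exp (x * v) - 1)) * (1 / x - 1 / (exp x - 1))"

definition A :: "real \<Rightarrow> real" where
  "A v = integral {0<..} (A_integrand v)"

definition C_const :: real where
  "C_const = (ln (2 * pi) - euler_mascheroni) / 2"

end

theory Submission imports Defs "HOL-Real_Asymp.Real_Asymp" begin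


definition sS :: "nat \<Rightarrow> real" where
  "sS n = ln (fact n) - (real n + 1/2) * ln (real n) + real n"

definition eH :: "nat \<Rightarrow> real" where
  "eH n = harm n - ln (real n) - euler_mascheroni"

lemma wallis_step0:
  fixes X F a b c :: real assumes "X > 0" "F > 0" "a > 0" "b > 0" "c > 0"
  shows "X^4 / (F^2 * b) * ((4*a) / (b*c)) = (16 * X^4 * (a*a)) / ((4*a*(b*b)*(F*F)) * c)"
  using assms by (simp add: field_simps power2_eq_square)

lemma wallis_step:
  fixes X F m :: real assumes "X > 0" "F > 0" "m \<ge> 0"
  shows "X^4 / (F^2 * (2*m + 1)) * ((4*(m+1)^2) / (4*(m+1)^2 - 1)) =
         (2*X*(m+1))^4 / (((2*m+2)*(2*m+1)*F)^2 * (2*(m+1) + 1))"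
proof -
  have 1: "4*(m+1)^2 - 1 = (2*m+1)*(2*m+3)" by (simp add: power2_eq_square algebra_simps)
  have 2: "(2*X*(m+1))^4 = 16 * X^4 * ((m+1)^2*(m+1)^2)" by (simp add: power_mult_distrib flip: power_add)
  have 3: "((2*m+2)*(2*m+1)*F)^2 = 4*(m+1)^2*((2*m+1)*(2*m+1))*(F*F)"
    by (simp add: power_mult_distrib power2_eq_square algebra_simps)
  have 4: "2*(m+1) + 1 = 2*m+3" by simp
  show ?thesis unfolding 1 2 3 4 using assms by (intro wallis_step0) auto
qed

lemma wallis_fact:
  "(\<Prod>k=1..n. (4*real k^2) / (4*real k^2 - 1)) =
     (2^n * fact n)^4 / ((fact (2*n))^2 * (2*real n + 1))"
proof (induction n)
  case 0 then show ?case by simp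
next
  case (Suc n)
  have e: "fact (2 * Suc n) = (2*real n + 2) * (2*real n+1) * (fact (2*n) :: real)"
    by (simp add: algebra_simps)
  have "(\<Prod>k=1..Suc n. (4*real k^2) / (4*real k^2 - 1)) =
        (2^n * fact n)^4 / ((fact (2*n))^2 * (2*real n + 1)) * ((4*real (Suc n)^2) / (4*real (Suc n)^2 - 1))"
    using Suc by (simp add: prod.nat_ivl_Suc')
  also have "\<dots> = (2^Suc n * fact (Suc n))^4 / ((fact (2*Suc n))^2 * (2*real (Suc n) + 1))"
  proof -
    have 1: "(2::real)^Suc n * fact (Suc n) = 2 * (2^n * fact n) * (real n + 1)" by (simp add: algebra_simps)
    have 2: "2*real (Suc n) + 1 = 2*(real n+1)+1" "real (Suc n) = real n + 1" by simp_all
    show ?thesis unfolding e 1 2 by (rule wallis_step) auto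
  qed
  finally show ?case .
qed

lemma ln_wallis:
  assumes "n \<ge> 1"
  shows "ln (\<Prod>k=1..n. (4*real k^2) / (4*real k^2 - 1)) =
    4 * sS n - 2 * sS (2*n) - ln 2 + ln (real n) - ln (2*real n + 1)"
proof -
  have p: "(0::real) < fact n" "(0::real) < fact (2*n)" by auto
  have "ln ((2^n * fact n)^4 / ((fact (2*n))^2 * (2*real n + 1)) :: real) =
     4 * (real n * ln 2 + ln (fact n)) - 2 * ln (fact (2*n)) - ln (2*real n + 1)"
    using p by (simp add: ln_div ln_mult ln_realpow)
  moreover have "ln (real (2*n)) = ln 2 + ln (real n)" using assms by (simp add: ln_mult)
  ultimately show ?thesis unfolding wallis_fact sS_def
    by (simp add: algebra_simps)
qed

lemma ln_ineq: fixes x :: real assumes "x > 0" shows "ln (1 + x) \<ge> 2*x/(2+x)"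
proof -
  let ?h = "\<lambda>y::real. ln (1 + y) - 2*y/(2+y)"
  have "?h 0 \<le> ?h x"
  proof (rule DERIV_nonneg_imp_nondecreasing[of 0 x ?h])
    show "0 \<le> x" using assms by simp
    fix y assume y: "0 \<le> y" "y \<le> x"
    have "(?h has_real_derivative (1/(1+y) - 4/(2+y)^2)) (at y)"
      using y by (auto intro!: derivative_eq_intros simp: field_simps power2_eq_square)
    moreover have "1/(1+y) - 4/(2+y)^2 \<ge> 0"
    proof -
      have "4*(1+y) \<le> (2+y)^2" by (simp add: power2_eq_square algebra_simps)
      then have "4/(2+y)^2 \<le> 1/(1+y)" using y by (simp add: field_simps)
      then show ?thesis by simp
    qed
    ultimately show "\<exists>d. (?h has_real_derivative d) (at y) \<and> 0 \<le> d" by blast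
  qed
  then show ?thesis by simp
qed

lemma sS_step: assumes "n \<ge> 1" shows "sS (Suc n) \<le> sS n"
proof -
  have "ln (1 + 1/real n) \<ge> 2*(1/real n)/(2 + 1/real n)" using assms by (intro ln_ineq) auto
  also have "2*(1/real n)/(2 + 1/real n) = 1 / (real n + 1/2)" using assms by (simp add: field_simps)
  finally have *: "(real n + 1/2) * ln (1 + 1/real n) \<ge> 1" using assms by (simp add: field_simps)
  have "1 + 1/real n = (real n + 1) / real n" using assms by (simp add: field_simps)
  then have "ln (1 + 1/real n) = ln (real n + 1) - ln (real n)"
    using assms by (simp add: ln_div)
  moreover have "ln (fact (Suc n) :: real) = ln (real n + 1) + ln (fact n)"
    by (simp add: ln_mult add.commute)
  moreover have "real (Suc n) = real n + 1" by simp
  ultimately show ?thesis using * unfolding sS_def by (simp only:) (simp add: algebra_simps)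
qed

lemma sS_le1: "n \<ge> 1 \<Longrightarrow> sS n \<le> 1"
proof (induction n rule: dec_induct)
  case base then show ?case by (simp add: sS_def)
next
  case (step n) then show ?case using sS_step[of n] by simp
qed

lemma eH_lim: "(\<lambda>n. (real n + 1) * eH n) \<longlonglongrightarrow> 1/2"
proof -
  have lo: "(real m + 3) * (1/(real m + 2) - 1/(2*(real m+1))) \<le> (real (m+2) + 1) * eH (m+2)" for m
  proof -
    have "euler_mascheroni \<le> harm (Suc m) - ln (real (m + 2)) + 1/real (2 * (m + 1))"
      by (rule euler_mascheroni_upper)
    moreover have "harm (m+2) = harm (Suc m) + 1/(real m + 2)" by (simp add: harm_Suc field_simps)
    moreover have "1/real (2 * (m + 1)) = 1/(2*(real m+1))" by simp
    ultimately have "eH (m+2) \<ge> 1/(real m + 2) - 1/(2*(real m+1))" unfolding eH_def by linarith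
    moreover have "real (m+2) + 1 = real m + 3" by simp
    ultimately show ?thesis by (simp only:) (intro mult_left_mono, auto)
  qed
  have up: "(real (m+2) + 1) * eH (m+2) \<le> (real m + 3) * (1/(real m + 2) - 1/(2*(real m+2)))" for m
  proof -
    have "euler_mascheroni \<ge> harm (Suc m) - ln (real (m + 2)) + 1/real (2 * (m + 2))"
      by (rule euler_mascheroni_lower)
    moreover have "harm (m+2) = harm (Suc m) + 1/(real m + 2)" by (simp add: harm_Suc field_simps)
    moreover have "1/real (2 * (m + 2)) = 1/(2*(real m+2))" by simp
    ultimately have "eH (m+2) \<le> 1/(real m + 2) - 1/(2*(real m+2))" unfolding eH_def by linarith
    moreover have "real (m+2) + 1 = real m + 3" by simp
    ultimately show ?thesis by (simp only:) (intro mult_left_mono, auto)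
  qed
  have l1: "(\<lambda>m. (real m + 3) * (1/(real m + 2) - 1/(2*(real m+1)))) \<longlonglongrightarrow> 1/2" by real_asymp
  have l2: "(\<lambda>m. (real m + 3) * (1/(real m + 2) - 1/(2*(real m+2)))) \<longlonglongrightarrow> 1/2" by real_asymp
  have "(\<lambda>m. (real (m+2) + 1) * eH (m+2)) \<longlonglongrightarrow> 1/2"
    by (rule tendsto_sandwich[OF _ _ l1 l2]) (use lo up in auto)
  then show ?thesis by (rule LIMSEQ_offset)
qed

definition aS :: "nat \<Rightarrow> real" where "aS n = 1 - real n * ln ((real n + 1) / real n)"
definition cS :: "nat \<Rightarrow> real" where "cS n = harm (Suc n) - ln (real n + 1) - euler_mascheroni"

lemma pc_aux:
  fixes x H l1 l0 lf g :: real assumes "x \<ge> 0"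
  shows "2 * lf - x * l0 + 2 * x - (x + 1) * (H - 1 / (x + 1)) + x * g + ((1 - x * l1 + x * l0) - (H - l1 - g))
     = 2 * (l1 + lf) - (x + 1) * l1 + 2 * (x + 1) - (x + 1 + 1) * H + (x + 1) * g"
proof -
  have "(x + 1) * (H - 1 / (x + 1)) = (x+1) * H - 1" using assms by (simp add: field_simps)
  then show ?thesis by (simp add: algebra_simps)
qed

lemma partial_closed:
  "(\<Sum>n<N. aS n - cS n) = 2 * ln (fact N) - real N * ln (real N) + 2 * real N
      - (real N + 1) * harm N + real N * euler_mascheroni"
proof (induction N)
  case 0 then show ?case by (simp add: harm_def)
next
  case (Suc N)
  have h0: "harm (Suc N) = harm N + 1/(real N + 1)" unfolding harm_Suc by (simp add: inverse_eq_divide add.commute)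
  have h: "harm N = harm (Suc N) - 1/(real N + 1)" using h0 by simp
  have f: "ln (fact (Suc N) :: real) = ln (real N + 1) + ln (fact N)"
    by (simp add: ln_mult add.commute)
  have r: "real (Suc N) = real N + 1" by simp
  have a: "aS N = 1 - real N * ln (real N + 1) + real N * ln (real N)"
  proof (cases "N = 0")
    case True then show ?thesis by (simp add: aS_def)
  next
    case False then show ?thesis by (simp add: aS_def ln_div algebra_simps)
  qed
  have "(\<Sum>n<Suc N. aS n - cS n) = (2 * ln (fact N) - real N * ln (real N) + 2 * real N
      - (real N + 1) * harm N + real N * euler_mascheroni) + (aS N - cS N)" using Suc by simp
  also have "\<dots> = 2 * ln (fact (Suc N)) - real (Suc N) * ln (real (Suc N)) + 2 * real (Suc N)
      - (real (Suc N) + 1) * harm (Suc N) + real (Suc N) * euler_mascheroni"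
  proof -
    have e: "(real N + 1) * (harm (Suc N) - 1/(real N+1)) = (real N+1)*harm(Suc N) - 1" by (simp add: field_simps)
    show ?thesis unfolding f r a cS_def h e by (simp add: algebra_simps)
  qed
  finally show ?case .
qed

lemma partial_sS: "N \<ge> 1 \<Longrightarrow> (\<Sum>n<N. aS n - cS n) = 2 * sS N - (real N + 1) * eH N - euler_mascheroni"
  unfolding partial_closed sS_def eH_def by (simp add: algebra_simps)

lemma series_value:
  assumes nn: "\<And>n. aS n - cS n \<ge> 0"
  shows "(\<lambda>n. aS n - cS n) sums (ln (2*pi) - euler_mascheroni - 1/2)"
proof -
  define S where "S N = (\<Sum>n<N. aS n - cS n)" for N
  have inc: "incseq S"
  proof (rule incseq_SucI)
    fix n show "S n \<le> S (Suc n)" using nn[of n] by (simp add: S_def)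
  qed
  have "bounded (range (\<lambda>n. (real n + 1) * eH n))" using eH_lim by (rule convergent_imp_bounded)
  then obtain B where B0: "\<forall>x\<in>range (\<lambda>n. (real n + 1) * eH n). norm x \<le> B"
    unfolding bounded_iff by blast
  have B: "\<bar>(real n + 1) * eH n\<bar> \<le> B" for n using B0 by auto
  have "S N \<le> max 0 (2 + B - euler_mascheroni)" for N
  proof (cases "N \<ge> 1")
    case True
    then show ?thesis unfolding S_def using partial_sS[OF True] sS_le1[OF True] B[of N] by (auto simp: max_def)
  next
    case False then have "N = 0" by simp
    then show ?thesis by (simp add: S_def)
  qed
  then have "bdd_above (range S)" by (intro bdd_aboveI2) auto
  from LIMSEQ_incseq_SUP[OF this inc] obtain V where SV: "S \<longlonglongrightarrow> V" by blast
  define L where "L = (V + 1/2 + euler_mascheroni) / 2"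
  have "(\<lambda>N. (S N + (real N + 1) * eH N + euler_mascheroni) / 2) \<longlonglongrightarrow> L"
    unfolding L_def by (intro tendsto_intros SV eH_lim) simp_all
  moreover have "eventually (\<lambda>N. (S N + (real N + 1) * eH N + euler_mascheroni) / 2 = sS N) sequentially"
    using eventually_ge_at_top[of 1] by eventually_elim (simp add: S_def partial_sS)
  ultimately have sL: "sS \<longlonglongrightarrow> L" by (rule Lim_transform_eventually)
  have s2: "(\<lambda>n. sS (2*n)) \<longlonglongrightarrow> L"
    by (rule filterlim_compose[OF sL]) (rule filterlim_subseq, simp add: strict_mono_def)
  have r: "(\<lambda>n. ln (real n) - ln (2*real n + 1)) \<longlonglongrightarrow> - ln 2" by real_asymp
  have "(\<lambda>n. 4 * sS n - 2 * sS (2*n) - ln 2 + (ln (real n) - ln (2*real n + 1))) \<longlonglongrightarrow> 4*L - 2*L - ln 2 + - ln 2"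
    by (intro tendsto_intros sL s2 r)
  moreover have "eventually (\<lambda>n. 4 * sS n - 2 * sS (2*n) - ln 2 + (ln (real n) - ln (2*real n + 1)) =
      ln (\<Prod>k=1..n. (4*real k^2) / (4*real k^2 - 1))) sequentially"
    using eventually_ge_at_top[of 1] by eventually_elim (subst ln_wallis, simp_all)
  ultimately have "(\<lambda>n. ln (\<Prod>k=1..n. (4*real k^2) / (4*real k^2 - 1))) \<longlonglongrightarrow> 4*L - 2*L - ln 2 + - ln 2"
    by (rule Lim_transform_eventually)
  moreover have "(\<lambda>n. ln (\<Prod>k=1..n. (4*real k^2) / (4*real k^2 - 1))) \<longlonglongrightarrow> ln (pi/2)"
    by (intro tendsto_intros wallis) simp
  ultimately have "4*L - 2*L - ln 2 + - ln 2 = ln (pi/2)" by (rule LIMSEQ_unique)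
  then have "2 * L = ln pi + ln 2" by (simp add: ln_div)
  then have "V = ln (2*pi) - euler_mascheroni - 1/2" unfolding L_def by (simp add: ln_mult)
  with SV show ?thesis unfolding S_def sums_def by simp
qed



definition fx :: "real \<Rightarrow> real" where "fx x = 1/x - 1/(exp x - 1)"
definition frc :: "real \<Rightarrow> real" where "frc t = t - real_of_int \<lfloor>t\<rfloor>"

lemma fx_measurable[measurable]: "fx \<in> borel_measurable borel"
  unfolding fx_def by measurable

lemma frc_measurable[measurable]: "frc \<in> borel_measurable borel"
  unfolding frc_def by measurable

lemma frc_nonneg: "frc t \<ge> 0" unfolding frc_def by linarith

lemma fx_zero[simp]: "fx 0 = 0" by (simp add: fx_def)

lemma fx_nonneg: assumes "x > 0" shows "fx x \<ge> 0"
proof -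
  have "exp x - 1 \<ge> x" using exp_ge_add_one_self[of x] by linarith
  then have "1/(exp x - 1) \<le> 1/x" using assms by (intro divide_left_mono) auto
  then show ?thesis unfolding fx_def by simp
qed

lemma indicator_decomp:
  fixes G :: "real \<Rightarrow> ennreal"
  shows "G t * indicator {0..} t = (\<Sum>n. G t * indicator {real n..<real n + 1} t)"
proof (cases "t \<ge> 0")
  case True
  define m where "m = nat \<lfloor>t\<rfloor>"
  have m: "real m \<le> t" "t < real m + 1" using True unfolding m_def by linarith+
  have "(\<Sum>n. G t * indicator {real n..<real n + 1} t) = (\<Sum>n\<in>{m}. G t * indicator {real n..<real n + 1} t)"
  proof (rule suminf_finite)
    fix n assume "n \<notin> {m}"
    then have "n < m \<or> n > m" by auto
    then have "t \<notin> {real n..<real n + 1}"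
    proof
      assume "n < m" then have "real n + 1 \<le> real m" by simp
      then show ?thesis using m by auto
    next
      assume "n > m" then have "real m + 1 \<le> real n" by simp
      then show ?thesis using m by auto
    qed
    then show "G t * indicator {real n..<real n + 1} t = 0" by simp
  qed simp
  also have "\<dots> = G t" using m by simp
  finally show ?thesis using True by simp
next
  case False
  then have "t \<notin> {real n..<real n + 1}" for n by auto
  then show ?thesis using False by simp
qed

lemma frc_piece: "t \<in> {real n..<real n + 1} \<Longrightarrow> frc t = t - real n"
proof -
  assume "t \<in> {real n..<real n + 1}"
  then have "\<lfloor>t\<rfloor> = int n" by (intro floor_unique) auto
  then show ?thesis by (simp add: frc_def)
qed

lemma nn_piece:
  fixes f :: "real \<Rightarrow> real" and a b I :: real
  assumes "a \<le> b" "\<And>x. x \<in> {a..b} \<Longrightarrow> 0 \<le> f x" "(f has_integral I) {a..b}"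
  shows "(\<integral>\<^sup>+t. ennreal (f t) * indicator {a..<b} t \<partial>lborel) = ennreal I"
proof -
  have "(\<integral>\<^sup>+t. ennreal (f t) * indicator {a..<b} t \<partial>lborel) = (\<integral>\<^sup>+t. ennreal (f t) * indicator {a..b} t \<partial>lborel)"
    by (intro nn_integral_cong_AE, use AE_lborel_singleton[of b] in eventually_elim)
       (auto simp: indicator_def)
  also have "\<dots> = ennreal I" using assms by (intro nn_integral_has_integral_lebesgue') auto
  finally show ?thesis .
qed

definition ww :: "real \<Rightarrow> real" where "ww x = (1 - exp (-x) - x * exp (-x)) / x^2"

lemma stepA_piece:
  assumes x: "x > 0"
  shows "(\<integral>\<^sup>+t. ennreal (frc t * exp (-x*t)) * indicator {real n..<real n + 1} t \<partial>lborel)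
         = ennreal (exp (-x) ^ n * ww x)"
proof -
  define G where "G t = -((t - real n)/x + 1/x^2) * exp (-x*t)" for t
  have "((\<lambda>t. (t - real n) * exp (-x*t)) has_integral (G (real n + 1) - G (real n))) {real n..real n + 1}"
  proof (rule fundamental_theorem_of_calculus_interior)
    show "continuous_on {real n..real n + 1} G" unfolding G_def using x by (intro continuous_intros) auto
    fix t assume "t \<in> {real n<..<real n + 1}"
    have "(G has_real_derivative (t - real n) * exp (-x*t)) (at t)"
      unfolding G_def using x
      by (auto intro!: derivative_eq_intros simp: field_simps power2_eq_square)
    then show "(G has_vector_derivative (t - real n) * exp (-x*t)) (at t)"
      by (simp add: has_real_derivative_iff_has_vector_derivative)
  qed simp
  moreover have "G (real n + 1) - G (real n) = exp (-x) ^ n * ww x"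
  proof -
    have e1: "exp (-x * (real n + 1)) = exp (-x) ^ n * exp (-x)"
      by (simp add: exp_of_nat_mult[symmetric] exp_add[symmetric] algebra_simps)
    have e2: "exp (-x * real n) = exp (-x) ^ n"
      by (simp add: exp_of_nat_mult[symmetric] algebra_simps)
    show ?thesis unfolding G_def ww_def e1 e2 using x by (simp add: field_simps power2_eq_square)
  qed
  ultimately have I: "((\<lambda>t. (t - real n) * exp (-x*t)) has_integral (exp (-x) ^ n * ww x)) {real n..real n + 1}"
    by simp
  have "(\<integral>\<^sup>+t. ennreal (frc t * exp (-x*t)) * indicator {real n..<real n + 1} t \<partial>lborel)
       = (\<integral>\<^sup>+t. ennreal ((t - real n) * exp (-x*t)) * indicator {real n..<real n + 1} t \<partial>lborel)"
    by (intro nn_integral_cong) (auto simp: frc_piece indicator_def)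
  also have "\<dots> = ennreal (exp (-x) ^ n * ww x)"
    by (rule nn_piece[OF _ _ I]) auto
  finally show ?thesis .
qed

lemma stepA:
  assumes x: "x > 0"
  shows "(\<integral>\<^sup>+t. ennreal (frc t * exp (-x*t)) * indicator {0..} t \<partial>lborel) = ennreal (fx x / x)"
proof -
  have "(\<integral>\<^sup>+t. ennreal (frc t * exp (-x*t)) * indicator {0..} t \<partial>lborel)
      = (\<integral>\<^sup>+t. (\<Sum>n. ennreal (frc t * exp (-x*t)) * indicator {real n..<real n + 1} t) \<partial>lborel)"
    by (subst indicator_decomp) (rule refl)
  also have "\<dots> = (\<Sum>n. \<integral>\<^sup>+t. ennreal (frc t * exp (-x*t)) * indicator {real n..<real n + 1} t \<partial>lborel)"
    by (rule nn_integral_suminf) measurable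
  also have "\<dots> = (\<Sum>n. ennreal (exp (-x) ^ n * ww x))"
    by (simp only: stepA_piece[OF x])
  also have "\<dots> = ennreal (\<Sum>n. exp (-x) ^ n * ww x)"
  proof (rule suminf_ennreal2)
    have "ww x \<ge> 0"
    proof -
      have "(1+x) * exp (-x) \<le> exp x * exp (-x)"
        by (intro mult_right_mono exp_ge_add_one_self) auto
      also have "exp x * exp (-x) = 1" by (simp flip: exp_add)
      finally show ?thesis unfolding ww_def by (simp add: algebra_simps)
    qed
    then show "0 \<le> exp (-x) ^ n * ww x" for n by simp
    show "summable (\<lambda>n. exp (-x) ^ n * ww x)" using x by (intro summable_mult2 summable_geometric) simp
  qed
  also have "(\<Sum>n. exp (-x) ^ n * ww x) = ww x / (1 - exp (-x))"
    using x by (subst suminf_mult2[symmetric]) (auto simp: suminf_geometric summable_geometric)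
  also have "ww x / (1 - exp (-x)) = fx x / x"
  proof -
    have "exp (-x) < 1" using x by simp
    moreover have "exp x * exp (-x) = 1" by (simp flip: exp_add)
    ultimately show ?thesis using x unfolding ww_def fx_def
      by (simp add: field_simps power2_eq_square exp_minus) 
  qed
  finally show ?thesis .
qed

lemma exp_int1:
  assumes a: "a > 0"
  shows "(\<integral>\<^sup>+x. ennreal (exp (-a*x)) * indicator {0..} x \<partial>lborel) = ennreal (1/a)"
proof -
  have "(\<integral>\<^sup>+x. ennreal (exp (-a*x)) * indicator {0..} x \<partial>lborel) = ennreal (0 - (- exp (-a*0)/a))"
  proof (rule nn_integral_FTC_atLeast)
    show "((\<lambda>x. - exp (-a*x)/a) \<longlongrightarrow> 0) at_top" using a by real_asymp
    fix x :: real
    show "((\<lambda>x. - exp (-a*x)/a) has_real_derivative exp (-a*x)) (at x)"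
      using a by (auto intro!: derivative_eq_intros)
  qed auto
  then show ?thesis by simp
qed

lemma exp_int2:
  assumes a: "a > 0"
  shows "(\<integral>\<^sup>+x. ennreal (x * exp (-a*x)) * indicator {0..} x \<partial>lborel) = ennreal (1/a^2)"
proof -
  have "(\<integral>\<^sup>+x. ennreal (x * exp (-a*x)) * indicator {0..} x \<partial>lborel) = ennreal (0 - (- (0/a + 1/a^2) * exp (-a*0)))"
  proof (rule nn_integral_FTC_atLeast)
    show "((\<lambda>x. - (x/a + 1/a^2) * exp (-a*x)) \<longlongrightarrow> 0) at_top" using a by real_asymp
    fix x :: real
    show "((\<lambda>x. - (x/a + 1/a^2) * exp (-a*x)) has_real_derivative x * exp (-a*x)) (at x)"
      using a by (auto intro!: derivative_eq_intros simp: field_simps power2_eq_square)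
  qed auto
  then show ?thesis by simp
qed

lemma stepB_point:
  assumes x: "x > 0"
  shows "ennreal (x * fx x * exp (-x*t)) + (\<Sum>k. ennreal (x * exp (-(real k + 1 + t)*x))) = ennreal (exp (-x*t))"
proof -
  define q where "q = exp (-x)"
  have q: "0 < q" "q < 1" using x by (auto simp: q_def)
  have eq1: "exp x - 1 = (1 - q)/q" unfolding q_def using x by (simp add: exp_minus field_simps)
  have "x * fx x = 1 - x * q/(1-q)" unfolding fx_def eq1 using x q by (simp add: field_simps)
  then have "x * fx x * exp (-x*t) = (1 - x * q/(1-q)) * exp (-x*t)" by simp
  also have "\<dots> = exp (-x*t) - x * exp (-x*t) * q / (1-q)" by (simp add: algebra_simps)
  finally have A: "x * fx x * exp (-x*t) = exp (-x*t) - x * exp (-x*t) * q / (1-q)" .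
  have B: "x * exp (-(real k + 1 + t)*x) = (x * exp (-x*t) * q) * q^k" for k
    unfolding q_def by (simp add: exp_of_nat_mult[symmetric] exp_add[symmetric] algebra_simps)
  have sB: "(\<lambda>k. x * exp (-(real k + 1 + t)*x)) sums (x * exp (-x*t) * q * (1 / (1 - q)))"
    unfolding B using q by (intro sums_mult geometric_sums) auto
  have "(\<Sum>k. ennreal (x * exp (-(real k + 1 + t)*x))) = ennreal (x * exp (-x*t) * q * (1 / (1 - q)))"
    using sB x by (subst suminf_ennreal2) (auto simp: sums_iff)
  moreover have "x * fx x * exp (-x*t) \<ge> 0" using fx_nonneg[OF x] x by simp
  moreover have "x * exp (-x*t) * q * (1 / (1 - q)) \<ge> 0" using x q by simp
  ultimately show ?thesis using A by (simp flip: ennreal_plus)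
qed

lemma stepB:
  assumes t: "t > 0"
  shows "(\<integral>\<^sup>+x. ennreal (x * fx x * exp (-x*t)) * indicator {0..} x \<partial>lborel)
          + (\<Sum>k. ennreal (1/(real k + 1 + t)^2)) = ennreal (1/t)"
proof -
  have "ennreal (1/t) = (\<integral>\<^sup>+x. ennreal (exp (-t*x)) * indicator {0..} x \<partial>lborel)"
    using exp_int1[OF t] by simp
  also have "\<dots> = (\<integral>\<^sup>+x. ennreal (x * fx x * exp (-x*t)) * indicator {0..} x
       + (\<Sum>k. ennreal (x * exp (-(real k + 1 + t)*x)) * indicator {0..} x) \<partial>lborel)"
  proof (intro nn_integral_cong_AE, use AE_lborel_singleton[of 0] in eventually_elim)
    fix x :: real assume "x \<noteq> 0"
    show "ennreal (exp (-t*x)) * indicator {0..} x = ennreal (x * fx x * exp (-x*t)) * indicator {0..} x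
       + (\<Sum>k. ennreal (x * exp (-(real k + 1 + t)*x)) * indicator {0..} x)"
    proof (cases "x > 0")
      case True
      then show ?thesis using stepB_point[OF True, of t]
        by (simp add: mult.commute[of _ "indicator _ _"] distrib_left[symmetric])
    next
      case False then show ?thesis using \<open>x \<noteq> 0\<close> by simp
    qed
  qed
  also have "\<dots> = (\<integral>\<^sup>+x. ennreal (x * fx x * exp (-x*t)) * indicator {0..} x \<partial>lborel)
       + (\<integral>\<^sup>+x. (\<Sum>k. ennreal (x * exp (-(real k + 1 + t)*x)) * indicator {0..} x) \<partial>lborel)"
    by (rule nn_integral_add) measurable
  also have "(\<integral>\<^sup>+x. (\<Sum>k. ennreal (x * exp (-(real k + 1 + t)*x)) * indicator {0..} x) \<partial>lborel)
      = (\<Sum>k. \<integral>\<^sup>+x. ennreal (x * exp (-(real k + 1 + t)*x)) * indicator {0..} x \<partial>lborel)"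
    by (rule nn_integral_suminf) measurable
  also have "\<dots> = (\<Sum>k. ennreal (1/(real k + 1 + t)^2))"
  proof -
    have "(\<integral>\<^sup>+x. ennreal (x * exp (-(real k + 1 + t)*x)) * indicator {0..} x \<partial>lborel) = ennreal (1/(real k + 1 + t)^2)" for k
      using exp_int2[of "real k + 1 + t"] t by (simp add: mult.commute)
    then show ?thesis by simp
  qed
  finally show ?thesis by simp
qed

definition bS :: "nat \<Rightarrow> nat \<Rightarrow> real" where
  "bS n k = ln (real n + real k + 2) - ln (real n + real k + 1) - 1/(real n + real k + 2)"

definition Phi :: "real \<Rightarrow> ennreal" where
  "Phi t = (\<integral>\<^sup>+x. ennreal (x * fx x * exp (-x*t)) * indicator {0..} x \<partial>lborel)"

lemma Phi_measurable[measurable]: "Phi \<in> borel_measurable borel"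
  unfolding Phi_def by measurable

lemma C1: "(\<integral>\<^sup>+t. ennreal ((t - real n)/t) * indicator {real n..<real n + 1} t \<partial>lborel) = ennreal (aS n)"
proof (cases "n = 0")
  case True
  have "((\<lambda>t. (t - real n)/t) has_integral ((\<lambda>t. t) 1 - (\<lambda>t. t) 0)) {0..1}"
  proof (rule fundamental_theorem_of_calculus_interior)
    fix t :: real assume "t \<in> {0<..<1}"
    then show "((\<lambda>t. t) has_vector_derivative (t - real n)/t) (at t)"
      using True by (auto intro!: derivative_eq_intros simp: has_real_derivative_iff_has_vector_derivative[symmetric])
  qed (auto intro: continuous_intros)
  then have "((\<lambda>t. (t - real n)/t) has_integral aS n) {real n..real n + 1}"
    using True by (simp add: aS_def)
  then show ?thesis by (rule nn_piece[rotated 2]) auto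
next
  case False
  then have n: "real n > 0" by simp
  have "((\<lambda>t. (t - real n)/t) has_integral ((\<lambda>t. t - real n * ln t) (real n + 1) - (\<lambda>t. t - real n * ln t) (real n)))
        {real n..real n + 1}"
  proof (rule fundamental_theorem_of_calculus_interior)
    show "continuous_on {real n..real n + 1} (\<lambda>t. t - real n * ln t)"
      using n by (intro continuous_intros) auto
    fix t :: real assume "t \<in> {real n<..<real n + 1}"
    then have "t > 0" using n by auto
    then show "((\<lambda>t. t - real n * ln t) has_vector_derivative (t - real n)/t) (at t)"
      by (auto intro!: derivative_eq_intros simp: field_simps has_real_derivative_iff_has_vector_derivative[symmetric])
  qed auto
  moreover have "(\<lambda>t. t - real n * ln t) (real n + 1) - (\<lambda>t. t - real n * ln t) (real n) = aS n"
    using n by (simp add: aS_def ln_div algebra_simps)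
  ultimately have "((\<lambda>t. (t - real n)/t) has_integral aS n) {real n..real n + 1}" by simp
  then show ?thesis by (rule nn_piece[rotated 2]) auto
qed

lemma C2_int: "((\<lambda>t. (t - real n)/(real k + 1 + t)^2) has_integral bS n k) {real n..real n + 1}"
proof -
  define F where "F t = ln (t + real k + 1) + (real n + real k + 1)/(t + real k + 1)" for t
  have "((\<lambda>t. (t - real n)/(real k + 1 + t)^2) has_integral (F (real n + 1) - F (real n))) {real n..real n + 1}"
  proof (rule fundamental_theorem_of_calculus_interior)
    show "continuous_on {real n..real n + 1} F"
      unfolding F_def by (intro continuous_intros) auto
    fix t :: real assume "t \<in> {real n<..<real n + 1}"
    then have t: "t + real k + 1 > 0" by auto
    define u where "u = t + real k + 1"
    have u: "u > 0" using t by (simp add: u_def)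
    have "(F has_real_derivative (1/u - (real n + real k + 1)/u^2)) (at t)"
      unfolding F_def u_def using t
      by (auto intro!: derivative_eq_intros simp: power2_eq_square minus_divide_left)
    moreover have "1/u - (real n + real k + 1)/u^2 = (u - (real n + real k + 1))/u^2"
      using u by (simp add: diff_divide_distrib power2_eq_square)
    moreover have "u - (real n + real k + 1) = t - real n" "real k + 1 + t = u" by (simp_all add: u_def)
    ultimately have "(F has_real_derivative (t - real n)/(real k + 1 + t)^2) (at t)" by simp
    then show "(F has_vector_derivative (t - real n)/(real k + 1 + t)^2) (at t)"
      by (simp add: has_real_derivative_iff_has_vector_derivative)
  qed auto
  moreover have "F (real n + 1) - F (real n) = bS n k"
    unfolding F_def bS_def by (simp add: field_simps add_ac)
  ultimately show ?thesis by simp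
qed

lemma C2: "(\<integral>\<^sup>+t. ennreal ((t - real n)/(real k + 1 + t)^2) * indicator {real n..<real n + 1} t \<partial>lborel) = ennreal (bS n k)"
  by (rule nn_piece[OF _ _ C2_int]) auto

lemma bS_nonneg: "bS n k \<ge> 0"
  by (rule has_integral_nonneg[OF C2_int]) auto

lemma bS_sums: "(\<lambda>k. bS n k) sums cS n"
proof -
  have ps: "(\<Sum>k<K. bS n k) = ln (real (K + (n+1))) - ln (real n + 1) - (harm (K + (n+1)) - harm (Suc n))" for K
  proof (induction K)
    case 0 then show ?case by simp
  next
    case (Suc K)
    have h: "harm (Suc K + (n+1)) = harm (K + (n+1)) + 1/(real n + real K + 2)"
      by (simp add: harm_Suc inverse_eq_divide add_ac)
    show ?case using Suc unfolding h by (simp add: bS_def add_ac)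
  qed
  have "(\<lambda>K. harm (K + (n+1)) - ln (real (K + (n+1))) :: real) \<longlonglongrightarrow> euler_mascheroni"
    using LIMSEQ_ignore_initial_segment[OF euler_mascheroni_LIMSEQ, of "n+1"] by simp
  then have "(\<lambda>K. - (harm (K + (n+1)) - ln (real (K + (n+1)))) - ln (real n + 1) + harm (Suc n)) \<longlonglongrightarrow>
      - euler_mascheroni - ln (real n + 1) + harm (Suc n)"
    by (intro tendsto_intros)
  then show ?thesis unfolding sums_def ps cS_def by (simp add: algebra_simps)
qed


lemma aS_nonneg: "aS n \<ge> 0"
proof (cases "n = 0")
  case True then show ?thesis by (simp add: aS_def)
next
  case False
  then have n: "real n > 0" by simp
  have "ln (1 + 1/real n) \<le> 1/real n" by (rule ln_add_one_self_le_self) simp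
  moreover have "(real n + 1)/real n = 1 + 1/real n" using n by (simp add: field_simps)
  ultimately have "real n * ln ((real n + 1)/real n) \<le> real n * (1/real n)"
    by (intro mult_left_mono) auto
  then show ?thesis using n by (simp add: aS_def)
qed

lemma cS_nonneg: "cS n \<ge> 0"
  using bS_sums[of n] bS_nonneg by (metis sums_unique suminf_nonneg sums_summable)

lemma stepC_point:
  assumes t: "t \<in> {real n..<real n + 1}"
  shows "ennreal (frc t) * Phi t + (\<Sum>k. ennreal ((t - real n)/(real k + 1 + t)^2)) = ennreal ((t - real n)/t)"
proof -
  have fr: "frc t = t - real n" using frc_piece[OF t] .
  have tn: "t - real n \<ge> 0" using t by simp
  show ?thesis
  proof (cases "t > 0")
    case True
    have e: "ennreal (t - real n) * (Phi t + (\<Sum>k. ennreal (1/(real k + 1 + t)^2))) = ennreal (t - real n) * ennreal (1/t)"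
      using stepB[OF True] unfolding Phi_def by simp
    have e1: "ennreal (t - real n) * ennreal (1/t) = ennreal ((t - real n)/t)"
      using tn True by (simp add: ennreal_mult[symmetric])
    have e2: "ennreal ((t - real n)/(real k + 1 + t)^2) = ennreal (t - real n) * ennreal (1/(real k + 1 + t)^2)" for k
      using tn by (simp add: ennreal_mult[symmetric])
    have e3: "(\<Sum>k. ennreal ((t - real n)/(real k + 1 + t)^2)) = ennreal (t - real n) * (\<Sum>k. ennreal (1/(real k + 1 + t)^2))"
      by (simp only: e2 ennreal_suminf_cmult)
    show ?thesis unfolding fr e3 using e e1 by (simp add: distrib_left)
  next
    case False
    then have "t = 0" using t by simp
    with fr have "frc t = 0" "t - real n = 0" using t by auto
    then show ?thesis by simp
  qed
qed

lemma stepC: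
  "(\<integral>\<^sup>+t. ennreal (frc t) * Phi t * indicator {real n..<real n + 1} t \<partial>lborel) + ennreal (cS n) = ennreal (aS n)"
proof -
  have "ennreal (aS n) = (\<integral>\<^sup>+t. ennreal ((t - real n)/t) * indicator {real n..<real n + 1} t \<partial>lborel)"
    using C1 by simp
  also have "\<dots> = (\<integral>\<^sup>+t. ennreal (frc t) * Phi t * indicator {real n..<real n + 1} t +
       (\<Sum>k. ennreal ((t - real n)/(real k + 1 + t)^2) * indicator {real n..<real n + 1} t) \<partial>lborel)"
  proof (rule nn_integral_cong)
    fix t :: real
    show "ennreal ((t - real n)/t) * indicator {real n..<real n + 1} t = ennreal (frc t) * Phi t * indicator {real n..<real n + 1} t +
       (\<Sum>k. ennreal ((t - real n)/(real k + 1 + t)^2) * indicator {real n..<real n + 1} t)"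
    proof (cases "t \<in> {real n..<real n + 1}")
      case True
      then show ?thesis using stepC_point[OF True] by simp
    next
      case False
      then show ?thesis by simp
    qed
  qed
  also have "\<dots> = (\<integral>\<^sup>+t. ennreal (frc t) * Phi t * indicator {real n..<real n + 1} t \<partial>lborel) +
       (\<integral>\<^sup>+t. (\<Sum>k. ennreal ((t - real n)/(real k + 1 + t)^2) * indicator {real n..<real n + 1} t) \<partial>lborel)"
    by (rule nn_integral_add) measurable
  also have "(\<integral>\<^sup>+t. (\<Sum>k. ennreal ((t - real n)/(real k + 1 + t)^2) * indicator {real n..<real n + 1} t) \<partial>lborel)
      = (\<Sum>k. \<integral>\<^sup>+t. ennreal ((t - real n)/(real k + 1 + t)^2) * indicator {real n..<real n + 1} t \<partial>lborel)"
    by (rule nn_integral_suminf) measurable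
  also have "\<dots> = (\<Sum>k. ennreal (bS n k))" by (simp only: C2)
  also have "\<dots> = ennreal (cS n)"
    using bS_sums[of n] bS_nonneg by (subst suminf_ennreal2) (auto simp: sums_iff)
  finally show ?thesis by simp
qed

lemma piece_val:
  "(\<integral>\<^sup>+t. ennreal (frc t) * Phi t * indicator {real n..<real n + 1} t \<partial>lborel) = ennreal (aS n - cS n)"
  "aS n - cS n \<ge> 0"
proof -
  let ?p = "(\<integral>\<^sup>+t. ennreal (frc t) * Phi t * indicator {real n..<real n + 1} t \<partial>lborel)"
  have e: "?p + ennreal (cS n) = ennreal (aS n)" by (rule stepC)
  then have "?p = ennreal (aS n) - ennreal (cS n)"
    by (metis ennreal_add_diff_cancel_right ennreal_neq_top)
  then show "?p = ennreal (aS n - cS n)" using cS_nonneg by (simp add: ennreal_minus)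
  have "ennreal (cS n) \<le> ennreal (aS n)" using e by (metis le_iff_add add.commute)
  then show "aS n - cS n \<ge> 0" using aS_nonneg by (simp add: ennreal_le_iff)
qed

lemma stepD:
  "(\<integral>\<^sup>+x. ennreal (fx x ^ 2) * indicator {0..} x \<partial>lborel) =
   (\<integral>\<^sup>+t. ennreal (frc t) * Phi t * indicator {0..} t \<partial>lborel)"
proof -
  define H where "H x t = (ennreal (x * fx x) * indicator {0..} x) * (ennreal (frc t * exp (-x*t)) * indicator {0..} t)" for x t :: real
  have H_meas: "case_prod H \<in> borel_measurable (lborel \<Otimes>\<^sub>M lborel)"
    unfolding H_def by measurable
  have 1: "ennreal (fx x ^ 2) * indicator {0..} x = (\<integral>\<^sup>+t. H x t \<partial>lborel)" for x
  proof (cases "x > 0")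
    case True
    have "(\<integral>\<^sup>+t. H x t \<partial>lborel) = ennreal (x * fx x) * (\<integral>\<^sup>+t. ennreal (frc t * exp (-x*t)) * indicator {0..} t \<partial>lborel)"
      unfolding H_def using True by (subst nn_integral_cmult) auto
    also have "\<dots> = ennreal (x * fx x) * ennreal (fx x / x)" by (simp only: stepA[OF True])
    also have "\<dots> = ennreal (fx x ^ 2)"
      using True fx_nonneg[OF True] by (simp add: ennreal_mult[symmetric] power2_eq_square)
    finally show ?thesis using True by simp
  next
    case False
    then show ?thesis by (cases "x = 0") (auto simp: H_def)
  qed
  have 2: "(\<integral>\<^sup>+x. H x t \<partial>lborel) = ennreal (frc t) * Phi t * indicator {0..} t" for t
  proof -
    have "(\<integral>\<^sup>+x. H x t \<partial>lborel) = (\<integral>\<^sup>+x. (ennreal (frc t) * indicator {0..} t) * (ennreal (x * fx x * exp (-x*t)) * indicator {0..} x) \<partial>lborel)"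
    proof (rule nn_integral_cong)
      fix x :: real
      show "H x t = (ennreal (frc t) * indicator {0..} t) * (ennreal (x * fx x * exp (-x*t)) * indicator {0..} x)"
      proof (cases "x \<ge> 0")
        case True
        have "x * fx x \<ge> 0" using fx_nonneg[of x] True by (cases "x = 0") auto
        have a: "ennreal (frc t * exp (-x*t)) = ennreal (frc t) * ennreal (exp (-x*t))"
          using frc_nonneg[of t] by (intro ennreal_mult) auto
        have b: "ennreal (x * fx x * exp (-x*t)) = ennreal (x * fx x) * ennreal (exp (-x*t))"
          using \<open>x * fx x \<ge> 0\<close> by (intro ennreal_mult) auto
        show ?thesis unfolding H_def a b by (simp only: mult_ac)
      next
        case False then show ?thesis by (simp add: H_def)
      qed
    qed
    also have "\<dots> = (ennreal (frc t) * indicator {0..} t) * Phi t"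
      unfolding Phi_def by (rule nn_integral_cmult) measurable
    finally show ?thesis by (simp add: mult_ac)
  qed
  have "(\<integral>\<^sup>+x. ennreal (fx x ^ 2) * indicator {0..} x \<partial>lborel) = (\<integral>\<^sup>+x. (\<integral>\<^sup>+t. H x t \<partial>lborel) \<partial>lborel)"
    by (simp only: 1)
  also have "\<dots> = (\<integral>\<^sup>+t. (\<integral>\<^sup>+x. H x t \<partial>lborel) \<partial>lborel)"
    by (rule lborel_pair.Fubini'[symmetric]) (rule H_meas)
  also have "\<dots> = (\<integral>\<^sup>+t. ennreal (frc t) * Phi t * indicator {0..} t \<partial>lborel)"
    by (simp only: 2)
  finally show ?thesis .
qed

lemma total_nn:
  "(\<integral>\<^sup>+x. ennreal (fx x ^ 2) * indicator {0..} x \<partial>lborel) = ennreal (ln (2*pi) - euler_mascheroni - 1/2)"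
proof -
  have "(\<integral>\<^sup>+t. ennreal (frc t) * Phi t * indicator {0..} t \<partial>lborel) =
        (\<integral>\<^sup>+t. (\<Sum>n. ennreal (frc t) * Phi t * indicator {real n..<real n + 1} t) \<partial>lborel)"
    by (subst indicator_decomp) (rule refl)
  also have "\<dots> = (\<Sum>n. \<integral>\<^sup>+t. ennreal (frc t) * Phi t * indicator {real n..<real n + 1} t \<partial>lborel)"
    by (rule nn_integral_suminf) measurable
  also have "\<dots> = (\<Sum>n. ennreal (aS n - cS n))" by (simp only: piece_val(1))
  also have "\<dots> = ennreal (ln (2*pi) - euler_mascheroni - 1/2)"
    using series_value[OF piece_val(2)] piece_val(2) by (subst suminf_ennreal2) (auto simp: sums_iff)
  finally show ?thesis using stepD by simp
qed

lemma value_nonneg: "ln (2*pi) - euler_mascheroni - 1/2 \<ge> 0"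
  using series_value[OF piece_val(2)] piece_val(2) by (metis sums_unique suminf_nonneg sums_summable)

lemma main_has_integral:
  "((\<lambda>x::real. (1 / x - 1 / (exp x - 1)) ^ 2) has_integral (ln (2*pi) - euler_mascheroni - 1/2)) {0<..}"
proof -
  let ?V = "ln (2*pi) - euler_mascheroni - 1/2"
  have "((\<lambda>x. indicator {0..} x * fx x ^ 2) has_integral ?V) UNIV"
  proof (rule nn_integral_has_integral)
    show "(\<lambda>x. indicator {0..} x * fx x ^ 2) \<in> borel_measurable borel" by measurable
    show "0 \<le> indicator {0..} x * fx x ^ 2" for x :: real by simp
    have "(\<integral>\<^sup>+x. ennreal (indicator {0..} x * fx x ^ 2) \<partial>lborel) = (\<integral>\<^sup>+x. ennreal (fx x ^ 2) * indicator {0..} x \<partial>lborel)"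
      by (intro nn_integral_cong) (auto simp: indicator_def)
    then show "(\<integral>\<^sup>+x. ennreal (indicator {0..} x * fx x ^ 2) \<partial>lborel) = ennreal ?V"
      using total_nn by simp
    show "0 \<le> ?V" by (rule value_nonneg)
  qed
  moreover have "(\<lambda>x. indicator {0..} x * fx x ^ 2) = (\<lambda>x. if x \<in> {0..} then fx x ^ 2 else 0)"
    by (auto simp: indicator_def)
  ultimately have "((\<lambda>x. fx x ^ 2) has_integral ?V) {0..}"
    by (simp only: has_integral_restrict_UNIV)
  moreover have "((\<lambda>x. fx x ^ 2) has_integral ?V) {0<..} \<longleftrightarrow> ((\<lambda>x. fx x ^ 2) has_integral ?V) {0..}"
  proof (rule has_integral_spike_set_eq)
    show "negligible {x \<in> {0<..} - {0..}. fx x ^ 2 \<noteq> (0::real)}"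
      by (rule negligible_subset[OF negligible_empty]) auto
    have "{x \<in> {0..} - {0<..}. fx x ^ 2 \<noteq> (0::real)} \<subseteq> {}"
    proof
      fix x assume "x \<in> {x \<in> {0..} - {0<..}. fx x ^ 2 \<noteq> (0::real)}"
      then have "x = 0" "fx x ^ 2 \<noteq> 0" by auto
      then show "x \<in> {}" by simp
    qed
    then show "negligible {x \<in> {0..} - {0<..}. fx x ^ 2 \<noteq> (0::real)}"
      by (rule negligible_subset[OF negligible_empty])
  qed
  ultimately have "((\<lambda>x. fx x ^ 2) has_integral ?V) {0<..}" by simp
  then show ?thesis unfolding fx_def .
qed

theorem mainTheorem20:
  shows "((\<lambda>x::real. (1 / x - 1 / (exp x - 1)) ^ 2) has_integral (2 * C_const - 1/2)) {0<..}
         \<and> A 1 = integral {0<..} (\<lambda>x::real. (1 / x - 1 / (exp x - 1)) ^ 2)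
         \<and> A 1 = 2 * C_const - 1/2"
proof -
  have c: "2 * C_const - 1/2 = ln (2*pi) - euler_mascheroni - 1/2" by (simp add: C_const_def)
  have h: "((\<lambda>x::real. (1 / x - 1 / (exp x - 1)) ^ 2) has_integral (2 * C_const - 1/2)) {0<..}"
    unfolding c by (rule main_has_integral)
  have a: "A 1 = integral {0<..} (\<lambda>x::real. (1 / x - 1 / (exp x - 1)) ^ 2)"
    unfolding A_def A_integrand_def by (simp add: power2_eq_square)
  show ?thesis using h a integral_unique[OF h] by simp
qed

end
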